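(* Let $k\ge 4$ be even and let $G$ be the $k$-uniform sunflower, with Laplacian tensor $\mathcal L$. Then $G$ is odd-bipartite, and $\lambda(\mathcal L)$ is the unique root in the interval $(2,4)$ of the equation $(\mu-2)-\left(\frac{1}{\mu-1}\right)^{\frac{1}{k-1}}-\left(\frac{1}{\mu-1}\right)^{k-1}=0$.
   Context: A $k$-uniform hypergraph $G=(V,E)$ ($k\ge 3$) is a simple undirected hypergraph with vertex set $V=[n]$ and a nonempty edge set $E$ of $k$-element subsets of $V$; $d_i$ denotes the number of edges containing vertex $i$. The $k$-uniform sunflower has vertex set $\{i_{j,s}: j\in[k-1], s\in[k]\}\cup\{i_k\}$ (all distinct) and edges $\{i_{j,1},\ldots,i_{j,k}\}$ for $j\in[k-1]$ together with $\{i_{1,1},i_{2,1},\ldots,i_{k-1,1},i_k\}$. The Laplacian tensor is $\mathcal L=\mathcal D-\mathcal A$, where $\mathcal A$ is the order-$k$ dimension-$n$ tensor with $a_{i_1\ldots i_k}=\frac1{(k-1)!}$ if $\{i_1,\ldots,i_k\}\in E$ and $0$ otherwise, and $\mathcal D$ is diagonal with $d_{i\ldots i}=d_i$; thus $(\mathcal L\mathbf x^{k-1})_i=d_ix_i^{k-1}-\sum_{e\in E,\,i\in e}\prod_{s\in e\setminus\{i\}}x_s$. A real $\lambda$ is an H-eigenvalue of $\mathcal L$ if some $\mathbf x\in\mathbb R^n\setminus\{0\}$ satisfies $(\mathcal L\mathbf x^{k-1})_i=\lambda x_i^{k-1}$ for all $i$; $\lambda(\mathcal L)$ is the largest H-eigenvalue.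 For even $k$, $G$ is odd-bipartite if $V$ can be partitioned into two nonempty disjoint sets $V_1,V_2$ such that every edge meets $V_1$ in an odd number of vertices. *)

theory Defs
  imports "HOL-Analysis.Analysis"
begin

text \<open>Hypergraphs on vertex set [n] = {1..n}; edges are sets of vertices.
  Order-k tensors of dimension n are functions on index lists (length k, entries in [n]).\<close>

definition hdeg :: "nat set set \<Rightarrow> nat \<Rightarrow> nat" where
  "hdeg E i = card {e \<in> E. i \<in> e}"

definition adj_tensor :: "nat \<Rightarrow> nat set set \<Rightarrow> nat list \<Rightarrow> real" where
  "adj_tensor k E is = (if set is \<in> E then 1 / fact (k - 1) else 0)"

definition deg_tensor :: "nat \<Rightarrow> nat set set \<Rightarrow> nat list \<Rightarrow> real" where
  "deg_tensor k E is = (if is \<noteq> [] \<and> is = replicate k (hd is) then real (hdeg E (hd is)) else 0)"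

definition lap_tensor :: "nat \<Rightarrow> nat set set \<Rightarrow> nat list \<Rightarrow> real" where
  "lap_tensor k E is = deg_tensor k E is - adj_tensor k E is"

definition tensor_apply :: "nat \<Rightarrow> nat \<Rightarrow> (nat list \<Rightarrow> real) \<Rightarrow> (nat \<Rightarrow> real) \<Rightarrow> nat \<Rightarrow> real" where
  "tensor_apply n k T x i =
     (\<Sum>is \<in> {is. set is \<subseteq> {1..n} \<and> length is = k - 1}. T (i # is) * prod_list (map x is))"

definition H_eigenvalue :: "nat \<Rightarrow> nat \<Rightarrow> (nat list \<Rightarrow> real) \<Rightarrow> real \<Rightarrow> bool" where
  "H_eigenvalue n k T lam \<longleftrightarrow>
     (\<exists>x :: nat \<Rightarrow> real. (\<exists>i \<in> {1..n}. x i \<noteq> 0) \<and>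
        (\<forall>i \<in> {1..n}. tensor_apply n k T x i = lam * x i ^ (k - 1)))"

definition is_largest_H_eigenvalue :: "nat \<Rightarrow> nat \<Rightarrow> (nat list \<Rightarrow> real) \<Rightarrow> real \<Rightarrow> bool" where
  "is_largest_H_eigenvalue n k T lam \<longleftrightarrow>
     H_eigenvalue n k T lam \<and> (\<forall>mu. H_eigenvalue n k T mu \<longrightarrow> mu \<le> lam)"

definition odd_bipartite :: "nat \<Rightarrow> nat set set \<Rightarrow> bool" where
  "odd_bipartite n E \<longleftrightarrow>
     (\<exists>V1 V2. V1 \<noteq> {} \<and> V2 \<noteq> {} \<and> V1 \<inter> V2 = {} \<and> V1 \<union> V2 = {1..n} \<and>
        (\<forall>e \<in> E. odd (card (e \<inter> V1))))"

text \<open>k-uniform sunflower: i_{j,s} = (j-1)k + s (j in [k-1], s in [k]), i_k = (k-1)k+1.\<close>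
definition sunflower_n :: "nat \<Rightarrow> nat" where
  "sunflower_n k = (k - 1) * k + 1"

definition sunflower_edges :: "nat \<Rightarrow> nat set set" where
  "sunflower_edges k =
     {{(j - 1) * k + s | s. s \<in> {1..k}} | j. j \<in> {1..k - 1}} \<union>
     {insert (sunflower_n k) {(j - 1) * k + 1 | j. j \<in> {1..k - 1}}}"

end

theory Submission
  imports Defs
begin


lemma lap_apply:
  assumes fin: "finite E" and edges: "\<And>e. e\<in>E \<Longrightarrow> e \<subseteq> {1..n} \<and> card e = k"
    and k: "k \<ge> 2" and i: "i \<in> {1..n}"
  shows "tensor_apply n k (lap_tensor k E) x i =
         real (hdeg E i) * x i ^ (k-1) - (\<Sum>e\<in>{e\<in>E. i\<in>e}. \<Prod>j\<in>e-{i}. x j)"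
proof -
  define S where "S = {ys. set ys \<subseteq> {1..n} \<and> length ys = k - 1}"
  define P where "P = (\<lambda>ys. prod_list (map x ys))"
  define E' where "E' = {e\<in>E. i\<in>e}"
  have finS: "finite S" unfolding S_def by (rule finite_lists_length_eq) simp
  have split: "tensor_apply n k (lap_tensor k E) x i =
     (\<Sum>ys\<in>S. deg_tensor k E (i#ys) * P ys) - (\<Sum>ys\<in>S. adj_tensor k E (i#ys) * P ys)"
    unfolding tensor_apply_def lap_tensor_def S_def P_def
    by (simp add: left_diff_distrib sum_subtractf)
  have rep: "replicate k i = i # replicate (k-1) i" using k
    by (cases k) auto
  have degeq: "deg_tensor k E (i#ys) = (if ys = replicate (k-1) i then real (hdeg E i) else 0)" for ys
    unfolding deg_tensor_def using rep by auto
  have rS: "replicate (k-1) i \<in> S" using i unfolding S_def by auto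
  have deg: "(\<Sum>ys\<in>S. deg_tensor k E (i#ys) * P ys) = real (hdeg E i) * x i ^ (k-1)"
  proof -
    have "(\<Sum>ys\<in>S. deg_tensor k E (i#ys) * P ys) =
        (\<Sum>ys\<in>S. if ys = replicate (k-1) i then real (hdeg E i) * P (replicate (k-1) i) else 0)"
      by (rule sum.cong) (auto simp: degeq)
    also have "\<dots> = real (hdeg E i) * P (replicate (k-1) i)"
      using finS rS by (simp add: sum.delta')
    finally show ?thesis by (simp add: P_def)
  qed
  define T where "T = {ys\<in>S. set (i#ys) \<in> E'}"
  have finT: "finite T" using finS unfolding T_def by simp
  have adj1: "(\<Sum>ys\<in>S. adj_tensor k E (i#ys) * P ys) = (1 / fact (k-1)) * sum P T"
  proof -
    have "(\<Sum>ys\<in>S. adj_tensor k E (i#ys) * P ys) =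
          (\<Sum>ys\<in>S. if set (i#ys) \<in> E' then (1 / fact (k-1)) * P ys else 0)"
      by (rule sum.cong) (auto simp: adj_tensor_def E'_def)
    also have "\<dots> = sum (\<lambda>ys. (1 / fact (k-1)) * P ys) T"
      unfolding T_def by (rule sum.inter_filter[OF finS, symmetric])
    finally show ?thesis by (simp add: sum_distrib_left)
  qed
  have finE': "finite E'" using fin unfolding E'_def by simp
  have grp: "sum P T = (\<Sum>e\<in>E'. sum P {ys. ys \<in> T \<and> set (i#ys) = e})"
    by (rule sum.group[symmetric]) (use finT finE' in \<open>auto simp: T_def\<close>)
  define Q where "Q = (\<lambda>e. {ys. length ys = k - 1 \<and> distinct ys \<and> set ys \<subseteq> e - {i}})"
  have Qset: "set ys = e - {i}" if e: "e \<in> E'" and q: "ys \<in> Q e" for e ys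
  proof -
    have ce: "card e = k" and ie: "i \<in> e" and sub: "e \<subseteq> {1..n}"
      using e edges E'_def by auto
    have fe: "finite e" using sub finite_subset by blast
    have "card (set ys) = card (e - {i})" using q distinct_card[of ys] ce ie fe unfolding Q_def by simp
    thus ?thesis using q fe card_subset_eq[of "e - {i}" "set ys"] unfolding Q_def by auto
  qed
  have perm: "{ys. ys \<in> T \<and> set (i#ys) = e} = Q e" if e: "e \<in> E'" for e
  proof (intro set_eqI iffI)
    fix ys assume A: "ys \<in> {ys. ys \<in> T \<and> set (i#ys) = e}"
    hence se: "set (i#ys) = e" and len: "length ys = k - 1" by (auto simp: T_def S_def)
    have ce: "card e = k" using e edges E'_def by auto
    have "card (set (i#ys)) = length (i#ys)" using se ce len k by simp
    hence d: "distinct (i#ys)" by (rule card_distinct)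
    have "set ys \<subseteq> e - {i}" using se d by auto
    thus "ys \<in> Q e" using d len unfolding Q_def by simp
  next
    fix ys assume A: "ys \<in> Q e"
    have se: "set ys = e - {i}" by (rule Qset[OF e A])
    have len: "length ys = k - 1" using A unfolding Q_def by simp
    have ie: "i \<in> e" and sub: "e \<subseteq> {1..n}"
      using e edges E'_def by auto
    have "set (i#ys) = e" using se ie by auto
    thus "ys \<in> {ys. ys \<in> T \<and> set (i#ys) = e}"
      using len sub se e by (auto simp: T_def S_def)
  qed
  have inner: "sum P (Q e) = fact (k-1) * (\<Prod>j\<in>e-{i}. x j)"
    if e: "e \<in> E'" for e
  proof -
    have ce: "card e = k" and ie: "i \<in> e" and sub: "e \<subseteq> {1..n}"
      using e edges E'_def by auto
    have fe: "finite e" using sub finite_subset by blast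
    have c1: "card (e - {i}) = k - 1" using ce ie fe by simp
    have "sum P (Q e) = sum (\<lambda>_. \<Prod>j\<in>e-{i}. x j) (Q e)"
    proof (rule sum.cong)
      fix ys assume q: "ys \<in> Q e"
      have dy: "distinct ys" using q by (simp add: Q_def)
      have "P ys = prod x (set ys)" unfolding P_def using prod.distinct_set_conv_list[OF dy, of x] by simp
      thus "P ys = (\<Prod>j\<in>e-{i}. x j)" using Qset[OF e q] by simp
    qed simp
    also have "card (Q e) = \<Prod>{1..k-1}"
      using card_lists_distinct_length_eq[of "e - {i}" "k-1"] fe c1 unfolding Q_def by simp
    hence "sum (\<lambda>_. \<Prod>j\<in>e-{i}. x j) (Q e) = fact (k-1) * (\<Prod>j\<in>e-{i}. x j)"
      by (simp add: fact_prod)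
    finally show ?thesis .
  qed
  have "sum P T = (\<Sum>e\<in>E'. fact (k-1) * (\<Prod>j\<in>e-{i}. x j))"
    unfolding grp by (rule sum.cong[OF refl]) (simp only: perm inner)
  also have "\<dots> = fact (k-1) * (\<Sum>e\<in>E'. \<Prod>j\<in>e-{i}. x j)"
    by (rule sum_distrib_left[symmetric])
  finally have sPT: "sum P T = fact (k-1) * (\<Sum>e\<in>E'. \<Prod>j\<in>e-{i}. x j)" .
  have fne: "(fact (k-1) :: real) \<noteq> 0" by simp
  have adj: "(\<Sum>ys\<in>S. adj_tensor k E (i#ys) * P ys) = (\<Sum>e\<in>E'. \<Prod>j\<in>e-{i}. x j)"
    unfolding adj1 sPT using fne by simp
  show ?thesis unfolding split deg adj E'_def ..
qed



lemma amgm_k: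
  fixes a :: "nat \<Rightarrow> real"
  assumes "finite S" "card S = k" "k > 0" "\<And>i. i \<in> S \<Longrightarrow> a i \<ge> 0"
  shows "real k * (\<Prod>i\<in>S. a i) \<le> (\<Sum>i\<in>S. a i ^ k)"
proof -
  have Sne: "S \<noteq> {}" using assms by auto
  have "(\<Prod>i\<in>S. a i ^ k) powr (1 / card S) \<le> (\<Sum>i \<in> S. a i ^ k / card S)"
    by (rule arith_geom_mean) (use assms in auto)
  moreover have "(\<Prod>i\<in>S. a i ^ k) powr (1 / card S) = (\<Prod>i\<in>S. a i)"
  proof -
    have P0: "(\<Prod>i\<in>S. a i) \<ge> 0" using assms by (simp add: prod_nonneg)
    have "(\<Prod>i\<in>S. a i ^ k) = (\<Prod>i\<in>S. a i) ^ k" by (simp add: prod_power_distrib)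
    also have "\<dots> = (\<Prod>i\<in>S. a i) powr real k"
    proof (cases "(\<Prod>i\<in>S. a i) = 0")
      case True thus ?thesis using assms by (simp only: True) (simp add: power_0_left)
    next
      case False thus ?thesis using P0 by (simp add: powr_realpow)
    qed
    finally show ?thesis using P0 assms by (simp add: powr_powr)
  qed
  moreover have "(\<Sum>i \<in> S. a i ^ k / card S) = (\<Sum>i \<in> S. a i ^ k) / k"
    using assms by (simp add: sum_divide_distrib)
  ultimately have h: "(\<Prod>i\<in>S. a i) \<le> (\<Sum>i \<in> S. a i ^ k) / k" using assms by simp
  thus ?thesis using assms by (simp add: pos_le_divide_eq mult.commute)
qed

lemma swap_edges:
  fixes f :: "nat \<Rightarrow> nat set \<Rightarrow> real"
  assumes "finite E" "\<And>e. e \<in> E \<Longrightarrow> e \<subseteq> V" "finite V"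
  shows "(\<Sum>i\<in>V. \<Sum>e\<in>{e\<in>E. i\<in>e}. f i e) = (\<Sum>e\<in>E. \<Sum>i\<in>e. f i e)"
proof -
  have "(\<Sum>i\<in>V. \<Sum>e\<in>{e\<in>E. i\<in>e}. f i e) = (\<Sum>i\<in>V. \<Sum>e\<in>E. if i \<in> e then f i e else 0)"
    using assms by (simp add: sum.inter_filter)
  also have "\<dots> = (\<Sum>e\<in>E. \<Sum>i\<in>V. if i \<in> e then f i e else 0)" by (rule sum.swap)
  also have "\<dots> = (\<Sum>e\<in>E. \<Sum>i\<in>{i\<in>V. i \<in> e}. f i e)"
    using assms by (simp add: sum.inter_filter)
  also have "\<dots> = (\<Sum>e\<in>E. \<Sum>i\<in>e. f i e)"
  proof (rule sum.cong)
    fix e assume "e \<in> E"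
    hence "{i\<in>V. i \<in> e} = e" using assms by auto
    thus "(\<Sum>i\<in>{i\<in>V. i \<in> e}. f i e) = (\<Sum>i\<in>e. f i e)" by simp
  qed simp
  finally show ?thesis .
qed

lemma even_pow_abs: "even k \<Longrightarrow> (x::real) ^ k = \<bar>x\<bar> ^ k"
  by (simp add: power_even_abs)

lemma upper_bound:
  assumes fin: "finite E" and edges: "\<And>e. e\<in>E \<Longrightarrow> e \<subseteq> {1..n} \<and> card e = k"
    and k: "k \<ge> 2" and ev: "even k"
    and upos: "\<And>i. i \<in> {1..n} \<Longrightarrow> u i > 0"
    and qeq: "\<And>i. i \<in> {1..n} \<Longrightarrow> (\<Sum>e\<in>{e\<in>E. i\<in>e}. \<Prod>j\<in>e. u j) = (mu - real (hdeg E i)) * u i ^ k"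
    and H: "H_eigenvalue n k (lap_tensor k E) lam"
  shows "lam \<le> mu"
proof -
  obtain x where xne: "\<exists>i \<in> {1..n}. x i \<noteq> 0"
    and eq: "\<And>i. i \<in> {1..n} \<Longrightarrow> tensor_apply n k (lap_tensor k E) x i = lam * x i ^ (k - 1)"
    using H unfolding H_eigenvalue_def by blast
  define V where "V = {1..n::nat}"
  have finV: "finite V" by (simp add: V_def)
  have eV: "\<And>e. e \<in> E \<Longrightarrow> e \<subseteq> V" using edges V_def by auto
  have fe: "\<And>e. e \<in> E \<Longrightarrow> finite e" using eV finV finite_subset by blast
  define d where "d = (\<lambda>i. real (hdeg E i))"
  have km: "k = Suc (k - 1)" using k by simp
  have eqi: "d i * x i ^ k - (\<Sum>e\<in>{e\<in>E. i\<in>e}. \<Prod>j\<in>e. x j) = lam * x i ^ k" if i: "i \<in> V" for i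
  proof -
    have "x i * (d i * x i ^ (k-1) - (\<Sum>e\<in>{e\<in>E. i\<in>e}. \<Prod>j\<in>e-{i}. x j)) = x i * (lam * x i ^ (k - 1))"
      using eq[of i] lap_apply[OF fin edges k, of i x] i V_def d_def by simp
    moreover have "x i * (\<Prod>j\<in>e-{i}. x j) = (\<Prod>j\<in>e. x j)" if "e \<in> {e\<in>E. i\<in>e}" for e
      using that fe prod.remove[of e i x] by auto
    ultimately have "d i * (x i * x i ^ (k-1)) - (\<Sum>e\<in>{e\<in>E. i\<in>e}. \<Prod>j\<in>e. x j) = lam * (x i * x i ^ (k - 1))"
      by (simp add: right_diff_distrib sum_distrib_left algebra_simps)
    moreover have "x i * x i ^ (k-1) = x i ^ k" using km by (metis power_Suc)
    ultimately show ?thesis by simp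
  qed
  have sumeq: "(\<Sum>i\<in>V. d i * x i ^ k) - (\<Sum>e\<in>E. real k * (\<Prod>j\<in>e. x j)) = lam * (\<Sum>i\<in>V. x i ^ k)"
  proof -
    have "(\<Sum>i\<in>V. d i * x i ^ k - (\<Sum>e\<in>{e\<in>E. i\<in>e}. \<Prod>j\<in>e. x j)) = (\<Sum>i\<in>V. lam * x i ^ k)"
      using eqi by (rule sum.cong[OF refl])
    moreover have "(\<Sum>i\<in>V. \<Sum>e\<in>{e\<in>E. i\<in>e}. \<Prod>j\<in>e. x j) = (\<Sum>e\<in>E. \<Sum>i\<in>e. \<Prod>j\<in>e. x j)"
      by (rule swap_edges[OF fin eV finV])
    moreover have "(\<Sum>e\<in>E. \<Sum>i\<in>e. \<Prod>j\<in>e. x j) = (\<Sum>e\<in>E. real k * (\<Prod>j\<in>e. x j))"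
      using edges by (intro sum.cong) auto
    ultimately show ?thesis by (simp add: sum_subtractf sum_distrib_left)
  qed
  have edge_bd: "- (real k * (\<Prod>j\<in>e. x j)) \<le> (\<Sum>i\<in>e. \<bar>x i\<bar> ^ k * (\<Prod>j\<in>e. u j) / u i ^ k)"
    if e: "e \<in> E" for e
  proof -
    have ue: "\<And>j. j \<in> e \<Longrightarrow> u j > 0" using eV[OF e] upos V_def by auto
    have Upos: "(\<Prod>j\<in>e. u j) > 0" using ue by (simp add: prod_pos)
    have "- (real k * (\<Prod>j\<in>e. x j)) \<le> real k * (\<Prod>j\<in>e. \<bar>x j\<bar>)"
    proof -
      have "- (\<Prod>j\<in>e. x j) \<le> (\<Prod>j\<in>e. \<bar>x j\<bar>)" 
        using abs_ge_minus_self[of "\<Prod>j\<in>e. x j"] by (simp add: abs_prod)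
      from mult_left_mono[OF this, of "real k"] show ?thesis by simp
    qed
    also have "(\<Prod>j\<in>e. \<bar>x j\<bar>) = (\<Prod>j\<in>e. u j) * (\<Prod>j\<in>e. \<bar>x j\<bar> / u j)"
    proof -
      have "(\<Prod>j\<in>e. u j) * (\<Prod>j\<in>e. \<bar>x j\<bar> / u j) = (\<Prod>j\<in>e. u j * (\<bar>x j\<bar> / u j))"
        by (simp only: prod.distrib)
      also have "\<dots> = (\<Prod>j\<in>e. \<bar>x j\<bar>)" using ue by (intro prod.cong) (auto simp: less_imp_neq[symmetric])
      finally show ?thesis by simp
    qed
    also have "real k * ((\<Prod>j\<in>e. u j) * (\<Prod>j\<in>e. \<bar>x j\<bar> / u j)) =
        (\<Prod>j\<in>e. u j) * (real k * (\<Prod>j\<in>e. \<bar>x j\<bar> / u j))" by simp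
    also have "\<dots> \<le> (\<Prod>j\<in>e. u j) * (\<Sum>i\<in>e. (\<bar>x i\<bar> / u i) ^ k)"
      using amgm_k[of e k "\<lambda>j. \<bar>x j\<bar> / u j"] fe[OF e] edges[OF e] k ue Upos
      by (intro mult_left_mono) (auto simp: less_imp_le)
    also have "\<dots> = (\<Sum>i\<in>e. \<bar>x i\<bar> ^ k * (\<Prod>j\<in>e. u j) / u i ^ k)"
      unfolding sum_distrib_left by (intro sum.cong) (simp_all add: power_divide ac_simps)
    finally show ?thesis .
  qed
  have "lam * (\<Sum>i\<in>V. x i ^ k) \<le> (\<Sum>i\<in>V. d i * x i ^ k) + (\<Sum>e\<in>E. \<Sum>i\<in>e. \<bar>x i\<bar> ^ k * (\<Prod>j\<in>e. u j) / u i ^ k)"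
  proof -
    have sm: "(\<Sum>e\<in>E. - (real k * (\<Prod>j\<in>e. x j))) \<le> (\<Sum>e\<in>E. \<Sum>i\<in>e. \<bar>x i\<bar> ^ k * (\<Prod>j\<in>e. u j) / u i ^ k)"
      by (rule sum_mono) (rule edge_bd)
    show ?thesis using sumeq sm by (simp add: sum_negf)
  qed
  also have "(\<Sum>e\<in>E. \<Sum>i\<in>e. \<bar>x i\<bar> ^ k * (\<Prod>j\<in>e. u j) / u i ^ k) =
      (\<Sum>i\<in>V. \<Sum>e\<in>{e\<in>E. i\<in>e}. \<bar>x i\<bar> ^ k * (\<Prod>j\<in>e. u j) / u i ^ k)"
    by (rule swap_edges[OF fin eV finV, symmetric])
  also have "\<dots> = (\<Sum>i\<in>V. \<bar>x i\<bar> ^ k * (mu - d i))"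
  proof (rule sum.cong[OF refl])
    fix i assume i: "i \<in> V"
    have "(\<Sum>e\<in>{e\<in>E. i\<in>e}. \<bar>x i\<bar> ^ k * (\<Prod>j\<in>e. u j) / u i ^ k)
        = \<bar>x i\<bar> ^ k / u i ^ k * (\<Sum>e\<in>{e\<in>E. i\<in>e}. \<Prod>j\<in>e. u j)"
      by (simp add: sum_distrib_left)
    also have "\<dots> = \<bar>x i\<bar> ^ k * (mu - d i)"
      using qeq[of i] i upos[of i] by (simp add: V_def d_def)
    finally show "(\<Sum>e\<in>{e\<in>E. i\<in>e}. \<bar>x i\<bar> ^ k * (\<Prod>j\<in>e. u j) / u i ^ k) = \<bar>x i\<bar> ^ k * (mu - d i)" .
  qed
  finally have "lam * (\<Sum>i\<in>V. x i ^ k) \<le> (\<Sum>i\<in>V. d i * x i ^ k + \<bar>x i\<bar> ^ k * (mu - d i))"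
    by (simp add: sum.distrib)
  also have "\<dots> = mu * (\<Sum>i\<in>V. x i ^ k)"
    using even_pow_abs[OF ev] by (simp add: sum_distrib_left algebra_simps)
  finally have le: "lam * (\<Sum>i\<in>V. x i ^ k) \<le> mu * (\<Sum>i\<in>V. x i ^ k)" .
  obtain i0 where i0: "i0 \<in> V" "x i0 \<noteq> 0" using xne V_def by auto
  have "(\<Sum>i\<in>V. x i ^ k) \<ge> x i0 ^ k"
    using ev i0 finV by (intro member_le_sum) (auto simp: zero_le_even_power)
  moreover have "x i0 ^ k > 0" using ev i0 k
    by (metis even_pow_abs not_le power_eq_0_iff zero_less_power zero_less_abs_iff le_less)
  ultimately have "(\<Sum>i\<in>V. x i ^ k) > 0" by linarith
  thus ?thesis using le by (simp only: mult_le_cancel_right_pos)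
qed



lemma eigen_from_Q:
  assumes fin: "finite E" and edges: "\<And>e. e\<in>E \<Longrightarrow> e \<subseteq> {1..n} \<and> card e = k"
    and k: "k \<ge> 2" and ev: "even k"
    and upos: "\<And>i. i \<in> {1..n} \<Longrightarrow> u i > 0"
    and qeq: "\<And>i. i \<in> {1..n} \<Longrightarrow> (\<Sum>e\<in>{e\<in>E. i\<in>e}. \<Prod>j\<in>e. u j) = (mu - real (hdeg E i)) * u i ^ k"
    and sig1: "\<And>i. i \<in> {1..n} \<Longrightarrow> \<sigma> i = 1 \<or> \<sigma> i = -1"
    and sigE: "\<And>e. e \<in> E \<Longrightarrow> (\<Prod>j\<in>e. \<sigma> j) = (-1::real)"
    and n1: "n \<ge> 1"
  shows "H_eigenvalue n k (lap_tensor k E) mu"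
proof -
  define x where "x = (\<lambda>i. \<sigma> i * u i)"
  have fe: "\<And>e. e \<in> E \<Longrightarrow> finite e" using edges finite_subset by blast
  have km: "k = Suc (k - 1)" using k by simp
  have oddk1: "odd (k - 1)" using ev k by simp
  have xe: "(\<Prod>j\<in>e. x j) = - (\<Prod>j\<in>e. u j)" if e: "e \<in> E" for e
    using sigE[OF e] unfolding x_def by (simp add: prod.distrib)
  have "tensor_apply n k (lap_tensor k E) x i = mu * x i ^ (k-1)" if i: "i \<in> {1..n}" for i
  proof -
    have ui: "u i > 0" using upos i by simp
    have xi0: "x i \<noteq> 0" using sig1[OF i] ui unfolding x_def by auto
    have rem: "(\<Prod>j\<in>e-{i}. x j) = - (\<Prod>j\<in>e. u j) / x i" if e: "e \<in> {e\<in>E. i\<in>e}" for e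
    proof -
      have "(\<Prod>j\<in>e. x j) = x i * (\<Prod>j\<in>e-{i}. x j)"
        using e fe prod.remove[of e i x] by auto
      thus ?thesis using xe[of e] e xi0 by (simp add: field_simps)
    qed
    have "(\<Sum>e\<in>{e\<in>E. i\<in>e}. \<Prod>j\<in>e-{i}. x j) = (\<Sum>e\<in>{e\<in>E. i\<in>e}. - (\<Prod>j\<in>e. u j) / x i)"
      using rem by (rule sum.cong[OF refl])
    also have "\<dots> = - (\<Sum>e\<in>{e\<in>E. i\<in>e}. \<Prod>j\<in>e. u j) / x i"
      by (simp add: sum_divide_distrib sum_negf)
    finally have S: "(\<Sum>e\<in>{e\<in>E. i\<in>e}. \<Prod>j\<in>e-{i}. x j) = - ((mu - real (hdeg E i)) * u i ^ k) / x i"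
      using qeq[OF i] by simp
    have uk: "u i ^ k = u i * u i ^ (k-1)" using km by (metis power_Suc)
    have T: "tensor_apply n k (lap_tensor k E) x i = real (hdeg E i) * x i ^ (k-1) + (mu - real (hdeg E i)) * (u i * u i ^ (k-1)) / x i"
      using lap_apply[OF fin edges k i, of x] S uk by simp
    from sig1[OF i] show ?thesis
    proof
      assume s: "\<sigma> i = 1"
      hence "x i = u i" by (simp add: x_def)
      thus ?thesis using T ui by (simp add: field_simps)
    next
      assume s: "\<sigma> i = -1"
      hence xi: "x i = - u i" by (simp add: x_def)
      have "x i ^ (k-1) = - (u i ^ (k-1))" using xi oddk1 by (simp add: power_minus_odd)
      thus ?thesis using T ui xi by (simp add: field_simps)
    qed
  qed
  moreover have "\<exists>i\<in>{1..n}. x i \<noteq> 0"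
  proof -
    have "1 \<in> {1..n}" using n1 by simp
    thus ?thesis using sig1[of 1] upos[of 1] unfolding x_def by force
  qed
  ultimately show ?thesis unfolding H_eigenvalue_def by blast
qed



definition Pe :: "nat \<Rightarrow> nat \<Rightarrow> nat set" where
  "Pe k j = {(j-1)*k+1 .. (j-1)*k+k}"

definition core :: "nat \<Rightarrow> nat \<Rightarrow> nat" where
  "core k j = (j-1)*k+1"

definition Ce :: "nat \<Rightarrow> nat set" where
  "Ce k = insert (sunflower_n k) (core k ` {1..k-1})"

lemma Pe_alt: "{(j - 1) * k + s | s. s \<in> {1..k}} = Pe k j"
proof (intro set_eqI iffI)
  fix v assume "v \<in> Pe k j"
  hence "v = (j-1)*k + (v - (j-1)*k) \<and> v - (j-1)*k \<in> {1..k}" by (auto simp: Pe_def)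
  thus "v \<in> {(j - 1) * k + s | s. s \<in> {1..k}}" by blast
qed (auto simp: Pe_def)

lemma edges_eq: "sunflower_edges k = Pe k ` {1..k-1} \<union> {Ce k}"
proof -
  have "{{(j - 1) * k + s | s. s \<in> {1..k}} | j. j \<in> {1..k - 1}} = Pe k ` {1..k-1}"
    using Pe_alt by blast
  moreover have "{(j - 1) * k + 1 | j. j \<in> {1..k - 1}} = core k ` {1..k-1}"
    by (auto simp: core_def)
  ultimately show ?thesis unfolding sunflower_edges_def Ce_def by simp
qed

lemma div_char:
  fixes q k m :: nat
  assumes "k > 0"
  shows "q div k = m \<longleftrightarrow> m*k \<le> q \<and> q < m*k + k"
proof
  assume h: "q div k = m"
  have e: "q = m * k + q mod k" using h div_mult_mod_eq[of q k] by simp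
  have "q mod k < k" using assms by simp
  thus "m*k \<le> q \<and> q < m*k + k" using e by linarith
next
  assume "m*k \<le> q \<and> q < m*k + k"
  thus "q div k = m" by (intro div_nat_eqI) (auto simp: mult.commute)
qed

context
  fixes k :: nat
  assumes k4: "k \<ge> 4"
begin

lemma kpos: "k > 0" using k4 by simp

lemma n_eq: "sunflower_n k = (k-1)*k + 1" by (simp add: sunflower_n_def)

lemma Pe_mem:
  assumes j: "j \<in> {1..k-1}" and v: "v \<ge> 1"
  shows "v \<in> Pe k j \<longleftrightarrow> (v-1) div k = j - 1"
  using div_char[OF kpos, of "v-1" "j-1"] v unfolding Pe_def by auto

lemma Pe_sub: assumes j: "j \<in> {1..k-1}" shows "Pe k j \<subseteq> {1..sunflower_n k - 1}"
proof -
  have "(j-1)*k + k \<le> (k-1)*k"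
  proof -
    have "(j-1)*k + k = j * k" using j by (cases j) auto
    also have "\<dots> \<le> (k-1)*k" using j by simp
    finally show ?thesis .
  qed
  thus ?thesis unfolding Pe_def n_eq by auto
qed

lemma card_Pe: "card (Pe k j) = k" unfolding Pe_def by simp

lemma core_lt: assumes j: "j \<in> {1..k-1}" shows "core k j < sunflower_n k"
proof -
  have "j - 1 < k - 1" using j k4 by auto
  hence "(j-1)*k < (k-1)*k" using kpos by simp
  thus ?thesis unfolding core_def n_eq by simp
qed

lemma n_notin_core: "sunflower_n k \<notin> core k ` {1..k-1}"
proof
  assume "sunflower_n k \<in> core k ` {1..k-1}"
  then obtain j where j: "j \<in> {1..k-1}" "sunflower_n k = core k j" by auto
  thus False using core_lt[OF j(1)] by simp
qed

lemma n_ge1: "sunflower_n k \<ge> 1" by (simp add: n_eq)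

lemma core_inj: "inj_on (core k) {1..k-1}"
  unfolding inj_on_def core_def using kpos by auto

lemma Ce_sub: "Ce k \<subseteq> {1..sunflower_n k}"
  using core_lt n_ge1 unfolding Ce_def by (auto simp: core_def less_imp_le)

lemma card_Ce: "card (Ce k) = k"
proof -
  have "sunflower_n k \<notin> core k ` {1..k-1}" by (rule n_notin_core)
  moreover have "card (core k ` {1..k-1}) = k - 1"
    using card_image[OF core_inj] by simp
  ultimately show ?thesis unfolding Ce_def using k4 by simp
qed

lemma core_mem:
  assumes v: "v \<in> {1..sunflower_n k - 1}"
  shows "v \<in> core k ` {1..k-1} \<longleftrightarrow> (v-1) mod k = 0"
proof
  assume "v \<in> core k ` {1..k-1}"
  then obtain j where "v = (j-1)*k+1" unfolding core_def by auto
  thus "(v-1) mod k = 0" by simp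
next
  assume m: "(v-1) mod k = 0"
  define j where "j = (v-1) div k + 1"
  have "v - 1 = (j-1) * k" using m unfolding j_def by (metis add_diff_cancel_right' div_mult_mod_eq add_0_right)
  moreover have "(v-1) div k < k - 1"
  proof -
    have lt: "v - 1 < (k-1)*k"
    proof -
      have "v \<le> (k-1)*k" "v \<ge> 1" using v unfolding n_eq by auto
      thus ?thesis by arith
    qed
    thus ?thesis using kpos by (simp add: div_less_iff_less_mult)
  qed
  ultimately have "v = core k j" "j \<in> {1..k-1}" using v unfolding core_def j_def by auto
  thus "v \<in> core k ` {1..k-1}" by blast
qed

lemma edges_at:
  assumes v: "v \<in> {1..sunflower_n k}"
  shows "{e \<in> sunflower_edges k. v \<in> e} =
    (if v = sunflower_n k then {Ce k}
     else if (v-1) mod k = 0 then {Pe k ((v-1) div k + 1), Ce k}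
     else {Pe k ((v-1) div k + 1)})"
proof -
  have nPe: "sunflower_n k \<notin> Pe k j" if "j \<in> {1..k-1}" for j using Pe_sub[OF that] n_ge1 by auto
  show ?thesis
  proof (cases "v = sunflower_n k")
    case True thus ?thesis using nPe by (auto simp: edges_eq Ce_def)
  next
    case False
    hence v': "v \<in> {1..sunflower_n k - 1}" using v by auto
    define j where "j = (v-1) div k + 1"
    have jr: "j \<in> {1..k-1}"
    proof -
      have lt: "v - 1 < (k-1)*k"
      proof -
        have "v \<le> (k-1)*k" "v \<ge> 1" using v' unfolding n_eq by auto
        thus ?thesis by arith
      qed
      hence "(v-1) div k < k - 1" using kpos by (simp add: div_less_iff_less_mult)
      thus ?thesis unfolding j_def by auto
    qed
    have vP: "v \<in> Pe k j' \<longleftrightarrow> j' = j" if jr': "j' \<in> {1..k-1}" for j'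
    proof -
      have "v \<in> Pe k j' \<longleftrightarrow> (v-1) div k = j' - 1" using Pe_mem[OF jr', of v] v' by simp
      also have "\<dots> \<longleftrightarrow> j' = j" using jr' unfolding j_def by auto
      finally show ?thesis .
    qed
    have vC: "v \<in> Ce k \<longleftrightarrow> (v-1) mod k = 0" using core_mem[OF v'] False unfolding Ce_def by auto
    have eq: "{e \<in> sunflower_edges k. v \<in> e} = {Pe k j} \<union> (if (v-1) mod k = 0 then {Ce k} else {})"
    proof (intro set_eqI iffI)
      fix e assume "e \<in> {e \<in> sunflower_edges k. v \<in> e}"
      hence e: "e \<in> sunflower_edges k" "v \<in> e" by auto
      from e(1) consider (P) j' where "j' \<in> {1..k-1}" "e = Pe k j'" | (C) "e = Ce k"
        unfolding edges_eq by blast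
      thus "e \<in> {Pe k j} \<union> (if (v-1) mod k = 0 then {Ce k} else {})"
      proof cases
        case P
        hence "j' = j" using vP[OF P(1)] e(2) by simp
        thus ?thesis using P by simp
      next
        case C
        hence "(v-1) mod k = 0" using vC e(2) by simp
        thus ?thesis using C by simp
      qed
    next
      fix e assume e: "e \<in> {Pe k j} \<union> (if (v-1) mod k = 0 then {Ce k} else {})"
      show "e \<in> {e \<in> sunflower_edges k. v \<in> e}"
      proof (cases "e = Pe k j")
        case True
        thus ?thesis using vP[OF jr] jr unfolding edges_eq by simp
      next
        case False
        hence "e = Ce k" "(v-1) mod k = 0" using e by (auto split: if_splits)
        thus ?thesis using vC unfolding edges_eq by simp
      qed
    qed
    show ?thesis
    proof (cases "(v-1) mod k = 0")
      case True thus ?thesis using eq False unfolding j_def by (simp add: insert_commute)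
    next
      case F2: False thus ?thesis using eq False unfolding j_def by simp
    qed
  qed
qed

lemma jv_range:
  assumes v: "v \<in> {1..sunflower_n k}" "v \<noteq> sunflower_n k"
  shows "(v-1) div k + 1 \<in> {1..k-1}"
proof -
  have "v \<le> (k-1)*k" "v \<ge> 1" using v unfolding n_eq by auto
  hence lt: "v - 1 < (k-1)*k" by arith
  hence "(v-1) div k < k - 1" using kpos by (simp add: div_less_iff_less_mult)
  thus ?thesis by auto
qed

lemma Pe_ne_Ce: "j \<in> {1..k-1} \<Longrightarrow> Pe k j \<noteq> Ce k"
  using Pe_sub[of j] n_ge1 unfolding Ce_def by auto

lemma edges_ok: "e \<in> sunflower_edges k \<Longrightarrow> e \<subseteq> {1..sunflower_n k} \<and> card e = k"
  unfolding edges_eq using Pe_sub card_Pe Ce_sub card_Ce by fastforce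

lemma fin_edges: "finite (sunflower_edges k)" unfolding edges_eq by simp

lemma prod_Pe:
  assumes j: "j \<in> {1..k-1}"
    and "f (core k j) = a" and "\<And>v. v \<in> Pe k j \<Longrightarrow> v \<noteq> core k j \<Longrightarrow> f v = (1::real)"
  shows "(\<Prod>v\<in>Pe k j. f v) = a"
proof -
  have "Pe k j = insert (core k j) (Pe k j - {core k j})" "core k j \<in> Pe k j"
    unfolding Pe_def core_def using kpos by auto
  hence "(\<Prod>v\<in>Pe k j. f v) = f (core k j) * (\<Prod>v\<in>Pe k j - {core k j}. f v)"
    by (metis finite_atLeastAtMost Pe_def prod.remove)
  also have "(\<Prod>v\<in>Pe k j - {core k j}. f v) = 1" using assms by (intro prod.neutral) auto
  finally show ?thesis using assms by simp
qed

lemma Pe_noncore: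
  assumes j: "j \<in> {1..k-1}" and v: "v \<in> Pe k j" "v \<noteq> core k j"
  shows "v \<noteq> sunflower_n k \<and> (v-1) mod k \<noteq> 0"
proof -
  have "v \<in> {1..sunflower_n k - 1}" using Pe_sub[OF j] v by auto
  moreover have "v \<notin> core k ` {1..k-1}"
  proof
    assume "v \<in> core k ` {1..k-1}"
    then obtain j' where j': "j' \<in> {1..k-1}" "v = core k j'" by auto
    hence "v \<in> Pe k j'" unfolding Pe_def core_def by auto
    hence "(v-1) div k = j' - 1" "(v-1) div k = j - 1" using Pe_mem j j' v by (auto simp: core_def)
    hence "j' = j" using j j' by auto
    thus False using j' v by simp
  qed
  ultimately show ?thesis using core_mem by auto
qed

lemma core_props: assumes "j \<in> {1..k-1}" shows "core k j \<noteq> sunflower_n k \<and> (core k j - 1) mod k = 0"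
  using core_lt[OF assms] by (simp add: core_def)

lemma prod_Ce:
  assumes "f (sunflower_n k) = b" and "\<And>j. j \<in> {1..k-1} \<Longrightarrow> f (core k j) = (a::real)"
  shows "(\<Prod>v\<in>Ce k. f v) = b * a ^ (k-1)"
proof -
  have "sunflower_n k \<notin> core k ` {1..k-1}" by (rule n_notin_core)
  hence "(\<Prod>v\<in>Ce k. f v) = f (sunflower_n k) * (\<Prod>v\<in>core k ` {1..k-1}. f v)"
    unfolding Ce_def by simp
  also have "(\<Prod>v\<in>core k ` {1..k-1}. f v) = (\<Prod>j\<in>{1..k-1}. f (core k j))"
    using prod.reindex[OF core_inj, of f] by (simp add: comp_def)
  also have "\<dots> = a ^ (k-1)" using assms by simp
  finally show ?thesis using assms by simp
qed

end



definition ff :: "nat \<Rightarrow> real \<Rightarrow> real" where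
  "ff k mu = (mu - 2) - (1 / (mu - 1)) powr (1 / real (k - 1)) - (1 / (mu - 1)) ^ (k - 1)"

lemma ff_mono:
  assumes k: "k \<ge> 2" and ab: "1 < a" "a < b"
  shows "ff k a < ff k b"
proof -
  have c: "1 / real (k - 1) > 0" using k by simp
  have lt: "1 / (b - 1) < 1 / (a - 1)" using ab by (simp add: frac_less2)
  have pos: "0 \<le> 1 / (b - 1)" using ab by simp
  have "(1 / (b - 1)) powr (1 / real (k - 1)) < (1 / (a - 1)) powr (1 / real (k - 1))"
    by (rule powr_less_mono2[OF c pos lt])
  moreover have "(1 / (b - 1)) ^ (k - 1) < (1 / (a - 1)) ^ (k - 1)"
    using k by (intro power_strict_mono[OF lt pos]) simp
  ultimately show ?thesis unfolding ff_def using ab by simp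
qed

lemma ff_root:
  assumes k: "k \<ge> 2"
  shows "\<exists>!mu. 2 < mu \<and> mu < 4 \<and> ff k mu = 0"
proof -
  have c: "1 / real (k - 1) > 0" using k by simp
  have f2: "ff k 2 < 0" unfolding ff_def by simp
  have "(1/3::real) powr (1 / real (k - 1)) < 1 powr (1 / real (k - 1))"
    by (rule powr_less_mono2[OF c]) auto
  hence p1: "(1/3::real) powr (1 / real (k - 1)) < 1" by simp
  have p2: "(1/3::real) ^ (k - 1) \<le> 1" by (rule power_le_one) auto
  have f4: "ff k 4 > 0" unfolding ff_def using p1 p2 by (simp add: numeral_eq_Suc)
  have cont: "continuous_on {2..4} (ff k)"
    unfolding ff_def by (intro continuous_intros) auto
  obtain x where x: "2 \<le> x" "x \<le> 4" "ff k x = 0"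
    using IVT'[of "ff k" 2 0 4, OF _ _ _ cont] f2 f4 by auto
  have "x \<noteq> 2" "x \<noteq> 4" using x f2 f4 by auto
  hence ex: "2 < x \<and> x < 4 \<and> ff k x = 0" using x by auto
  show ?thesis
  proof (rule ex1I[of _ x])
    show "2 < x \<and> x < 4 \<and> ff k x = 0" by (rule ex)
  next
    fix y assume y: "2 < y \<and> y < 4 \<and> ff k y = 0"
    show "y = x"
    proof (rule ccontr)
      assume "y \<noteq> x"
      hence "y < x \<or> x < y" by auto
      thus False using ff_mono[OF k, of y x] ff_mono[OF k, of x y] x y ex by auto
    qed
  qed
qed

lemma odd_bip:
  assumes k4: "k \<ge> 4" and ev: "even k"
  shows "odd_bipartite (sunflower_n k) (sunflower_edges k)"
proof -
  define V1 where "V1 = core k ` {1..k-1}"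
  define V2 where "V2 = {1..sunflower_n k} - V1"
  have V1sub: "V1 \<subseteq> {1..sunflower_n k}" using Ce_sub[OF k4] unfolding V1_def Ce_def by auto
  have "1 \<in> {1..k-1}" using k4 by simp
  hence ne1: "V1 \<noteq> {}" unfolding V1_def by blast
  have "sunflower_n k \<in> V2" using n_notin_core[OF k4] n_ge1[OF k4] unfolding V2_def V1_def by auto
  hence ne2: "V2 \<noteq> {}" by blast
  have odd: "odd (card (e \<inter> V1))" if e: "e \<in> sunflower_edges k" for e
  proof -
    from e consider (P) j where "j \<in> {1..k-1}" "e = Pe k j" | (C) "e = Ce k"
      unfolding edges_eq by auto
    thus ?thesis
    proof cases
      case P
      have "e \<inter> V1 = {core k j}"
      proof (intro set_eqI iffI)
        fix v assume v: "v \<in> e \<inter> V1"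
        show "v \<in> {core k j}"
        proof (rule ccontr)
          assume "v \<notin> {core k j}"
          hence "(v-1) mod k \<noteq> 0" using Pe_noncore[OF k4 P(1)] v P(2) by auto
          moreover obtain j' where "j' \<in> {1..k-1}" "v = core k j'" using v unfolding V1_def by auto
          ultimately show False using core_props[OF k4] by auto
        qed
      next
        fix v assume "v \<in> {core k j}"
        thus "v \<in> e \<inter> V1" using P unfolding V1_def Pe_def core_def by auto
      qed
      thus ?thesis by simp
    next
      case C
      have "e \<inter> V1 = V1" using C unfolding Ce_def V1_def by auto
      moreover have "card V1 = k - 1" unfolding V1_def using card_image[OF core_inj[OF k4]] by simp
      ultimately show ?thesis using ev k4 by simp
    qed
  qed
  have "V1 \<inter> V2 = {}" "V1 \<union> V2 = {1..sunflower_n k}" using V1sub unfolding V2_def by auto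
  thus ?thesis unfolding odd_bipartite_def
    using ne1 ne2 odd by (intro exI[of _ V1] exI[of _ V2]) simp
qed



definition sv :: "nat \<Rightarrow> real \<Rightarrow> real" where
  "sv k mu = (1 / (mu - 1)) powr (1 / real (k - 1))"

definition uvec :: "nat \<Rightarrow> real \<Rightarrow> nat \<Rightarrow> real" where
  "uvec k mu v = (if v = sunflower_n k then (mu - 1) * sv k mu else if (v - 1) mod k = 0 then mu - 1 else 1)"

definition sig :: "nat \<Rightarrow> nat \<Rightarrow> real" where
  "sig k v = (if v \<noteq> sunflower_n k \<and> (v - 1) mod k = 0 then -1 else 1)"

lemma sv_props:
  assumes k: "k \<ge> 2" and mu: "mu > 2"
  shows "sv k mu > 0" "sv k mu ^ (k - 1) = 1 / (mu - 1)"
proof -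
  have b: "1 / (mu - 1) > 0" using mu by simp
  show "sv k mu > 0" unfolding sv_def using b by simp
  have "sv k mu ^ (k - 1) = sv k mu powr real (k - 1)"
    using \<open>sv k mu > 0\<close> by (simp add: powr_realpow)
  also have "\<dots> = (1 / (mu - 1)) powr (1 / real (k - 1) * real (k - 1))"
    unfolding sv_def by (simp add: powr_powr)
  also have "\<dots> = 1 / (mu - 1)" using k b by simp
  finally show "sv k mu ^ (k - 1) = 1 / (mu - 1)" .
qed

lemma alg_center:
  fixes t s :: real
  assumes k: "k \<ge> 2" and t: "t > 0" and s: "s ^ (k - 1) = 1 / t"
  shows "(t * s) * t ^ (k - 1) = t * (t * s) ^ k"
proof -
  obtain m where km: "k = Suc m" using k by (cases k) auto
  have sm: "s ^ m = 1 / t" using s km by simp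
  have "t * (t * s) ^ k = t * t ^ k * s * s ^ m" by (simp add: km power_mult_distrib)
  also have "\<dots> = t ^ k * s" using sm t by simp
  also have "\<dots> = (t * s) * t ^ (k - 1)" by (simp add: km)
  finally show ?thesis by (rule sym)
qed

lemma alg_core:
  fixes t s :: real
  assumes k: "k \<ge> 2" and t: "t > 0"
  shows "t + (t * s) * t ^ (k - 1) = (s + (1 / t) ^ (k - 1)) * t ^ k"
proof -
  obtain m where km: "k = Suc m" using k by (cases k) auto
  have "(1 / t) ^ m * t ^ k = t * ((1 / t) ^ m * t ^ m)" by (simp add: km)
  also have "(1 / t) ^ m * t ^ m = ((1 / t) * t) ^ m" by (rule power_mult_distrib[symmetric])
  also have "\<dots> = 1" using t by simp
  finally have h: "(1 / t) ^ m * t ^ k = t" by simp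
  have "(s + (1 / t) ^ (k - 1)) * t ^ k = s * t ^ k + (1 / t) ^ m * t ^ k"
    by (simp add: km distrib_right)
  also have "\<dots> = s * t ^ k + t" using h by simp
  finally show ?thesis by (simp add: km)
qed

context
  fixes k :: nat and mu :: real
  assumes k4: "k \<ge> 4" and ev: "even k" and mu2: "mu > 2" and root: "ff k mu = 0"
begin

lemma k2: "k \<ge> 2" using k4 by simp

lemma u_pos: "uvec k mu v > 0"
  using sv_props(1)[OF k2 mu2] mu2 unfolding uvec_def by auto

lemma prod_u_Pe: assumes j: "j \<in> {1..k-1}" shows "(\<Prod>v\<in>Pe k j. uvec k mu v) = mu - 1"
proof (rule prod_Pe[OF k4 j])
  show "uvec k mu (core k j) = mu - 1" using core_props[OF k4 j] by (simp add: uvec_def)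
  fix v assume "v \<in> Pe k j" "v \<noteq> core k j"
  hence "v \<noteq> sunflower_n k \<and> (v-1) mod k \<noteq> 0" by (rule Pe_noncore[OF k4 j])
  thus "uvec k mu v = 1" by (simp add: uvec_def)
qed

lemma prod_u_Ce: "(\<Prod>v\<in>Ce k. uvec k mu v) = ((mu - 1) * sv k mu) * (mu - 1) ^ (k - 1)"
  by (rule prod_Ce[OF k4]) (use core_props[OF k4] in \<open>auto simp: uvec_def\<close>)

lemma prod_sig_Pe: assumes j: "j \<in> {1..k-1}" shows "(\<Prod>v\<in>Pe k j. sig k v) = -1"
proof (rule prod_Pe[OF k4 j])
  show "sig k (core k j) = -1" using core_props[OF k4 j] by (simp add: sig_def)
  fix v assume "v \<in> Pe k j" "v \<noteq> core k j"
  hence "v \<noteq> sunflower_n k \<and> (v-1) mod k \<noteq> 0" by (rule Pe_noncore[OF k4 j])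
  thus "sig k v = 1" by (simp add: sig_def)
qed

lemma prod_sig_Ce: "(\<Prod>v\<in>Ce k. sig k v) = -1"
proof -
  have "(\<Prod>v\<in>Ce k. sig k v) = 1 * (-1) ^ (k - 1)"
    by (rule prod_Ce[OF k4]) (use core_props[OF k4] in \<open>auto simp: sig_def\<close>)
  also have "\<dots> = -1" using ev k4 by simp
  finally show ?thesis .
qed

lemma sig_E: "e \<in> sunflower_edges k \<Longrightarrow> (\<Prod>v\<in>e. sig k v) = -1"
  unfolding edges_eq using prod_sig_Pe prod_sig_Ce by auto

lemma rootform: "mu - 2 = sv k mu + (1 / (mu - 1)) ^ (k - 1)"
  using root unfolding ff_def sv_def by simp

lemma qeq_sun:
  assumes v: "v \<in> {1..sunflower_n k}"
  shows "(\<Sum>e\<in>{e\<in>sunflower_edges k. v\<in>e}. \<Prod>j\<in>e. uvec k mu j)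
         = (mu - real (hdeg (sunflower_edges k) v)) * uvec k mu v ^ k"
proof -
  define t where "t = mu - 1"
  define s where "s = sv k mu"
  have t0: "t > 0" using mu2 t_def by simp
  have sp: "s ^ (k - 1) = 1 / t" using sv_props(2)[OF k2 mu2] unfolding s_def t_def .
  have hd: "hdeg (sunflower_edges k) v = card {e\<in>sunflower_edges k. v\<in>e}" by (simp add: hdeg_def)
  show ?thesis
  proof (cases "v = sunflower_n k")
    case True
    hence EA: "{e\<in>sunflower_edges k. v\<in>e} = {Ce k}" using edges_at[OF k4 v] by simp
    have a: "(t * s) * t ^ (k - 1) = t * (t * s) ^ k" by (rule alg_center[OF k2 t0 sp])
    have L: "(\<Sum>e\<in>{Ce k}. \<Prod>j\<in>e. uvec k mu j) = (t * s) * t ^ (k - 1)"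
      using prod_u_Ce unfolding t_def s_def by simp
    have R: "uvec k mu v = t * s" using True unfolding uvec_def t_def s_def by simp
    have D: "mu - real (card {Ce k}) = t" unfolding t_def by simp
    show ?thesis unfolding EA hd L R D using a .
  next
    case False
    define j where "j = (v - 1) div k + 1"
    have jr: "j \<in> {1..k-1}" using jv_range[OF k4 v False] unfolding j_def .
    show ?thesis
    proof (cases "(v - 1) mod k = 0")
      case True
      hence EA: "{e\<in>sunflower_edges k. v\<in>e} = {Pe k j, Ce k}"
        using edges_at[OF k4 v] False unfolding j_def by simp
      have ne: "Pe k j \<noteq> Ce k" by (rule Pe_ne_Ce[OF k4 jr])
      have "t + (t * s) * t ^ (k - 1) = (s + (1 / t) ^ (k - 1)) * t ^ k" by (rule alg_core[OF k2 t0])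
      hence a: "t + (t * s) * t ^ (k - 1) = (mu - 2) * t ^ k" using rootform unfolding s_def t_def by simp
      have D: "mu - real (card {Pe k j, Ce k}) = mu - 2" using ne by simp
      have L: "(\<Sum>e\<in>{Pe k j, Ce k}. \<Prod>j\<in>e. uvec k mu j) = t + (t * s) * t ^ (k - 1)"
        using ne prod_u_Pe[OF jr] prod_u_Ce unfolding t_def s_def by simp
      have R: "uvec k mu v = t" using True False unfolding uvec_def t_def by simp
      show ?thesis unfolding EA hd L R D using a .
    next
      case F2: False
      hence EA: "{e\<in>sunflower_edges k. v\<in>e} = {Pe k j}"
        using edges_at[OF k4 v] False unfolding j_def by simp
      have L: "(\<Sum>e\<in>{Pe k j}. \<Prod>j\<in>e. uvec k mu j) = mu - 1"
        using prod_u_Pe[OF jr] by simp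
      have R: "uvec k mu v = 1" using F2 False unfolding uvec_def by simp
      show ?thesis unfolding EA hd L R by simp
    qed
  qed
qed

lemma sig_vals: "sig k v = 1 \<or> sig k v = -1" unfolding sig_def by auto

lemma is_eig: "H_eigenvalue (sunflower_n k) k (lap_tensor k (sunflower_edges k)) mu"
  by (rule eigen_from_Q[OF fin_edges[OF k4] edges_ok[OF k4] k2 ev u_pos qeq_sun sig_vals sig_E n_ge1[OF k4]])

lemma is_largest: "is_largest_H_eigenvalue (sunflower_n k) k (lap_tensor k (sunflower_edges k)) mu"
  unfolding is_largest_H_eigenvalue_def
  using is_eig upper_bound[OF fin_edges[OF k4] edges_ok[OF k4] k2 ev u_pos qeq_sun] by blast

end

theorem proposition3p4:
  fixes k :: nat
  assumes "k \<ge> 4" and "even k"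
  shows "odd_bipartite (sunflower_n k) (sunflower_edges k) \<and>
    (\<exists>!mu::real. 2 < mu \<and> mu < 4 \<and>
        (mu - 2) - (1 / (mu - 1)) powr (1 / real (k - 1)) - (1 / (mu - 1)) ^ (k - 1) = 0) \<and>
    (\<forall>mu::real. 2 < mu \<and> mu < 4 \<and>
        (mu - 2) - (1 / (mu - 1)) powr (1 / real (k - 1)) - (1 / (mu - 1)) ^ (k - 1) = 0
      \<longrightarrow> is_largest_H_eigenvalue (sunflower_n k) k (lap_tensor k (sunflower_edges k)) mu)"
proof (intro conjI)
  show "odd_bipartite (sunflower_n k) (sunflower_edges k)" by (rule odd_bip[OF assms])
  show "\<exists>!mu::real. 2 < mu \<and> mu < 4 \<and>
        (mu - 2) - (1 / (mu - 1)) powr (1 / real (k - 1)) - (1 / (mu - 1)) ^ (k - 1) = 0"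
    using ff_root[of k] assms unfolding ff_def by simp
  show "\<forall>mu::real. 2 < mu \<and> mu < 4 \<and>
        (mu - 2) - (1 / (mu - 1)) powr (1 / real (k - 1)) - (1 / (mu - 1)) ^ (k - 1) = 0
      \<longrightarrow> is_largest_H_eigenvalue (sunflower_n k) k (lap_tensor k (sunflower_edges k)) mu"
  proof (intro allI impI)
    fix mu :: real
    assume h: "2 < mu \<and> mu < 4 \<and> (mu - 2) - (1 / (mu - 1)) powr (1 / real (k - 1)) - (1 / (mu - 1)) ^ (k - 1) = 0"
    hence "ff k mu = 0" "mu > 2" unfolding ff_def by auto
    thus "is_largest_H_eigenvalue (sunflower_n k) k (lap_tensor k (sunflower_edges k)) mu"
      using is_largest assms by blast
  qed
qed


end
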